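(* Consider the part-wise coactive learning algorithm (PCL) described in the context, run for $T$ iterations with any ordering $p_1,\dots,p_n$ of the basic parts and any rule for selecting the part $p^t$ at each iteration, interacting with a conditionally $\alpha$-informative user with $\alpha\in(0,1]$. Then $$\frac{1}{T}\sum_{t=1}^T \mathrm{CREG}_{p^t}(x^t)\le \frac{2DS\|\mathbf{w}^*\|}{\alpha\sqrt{T}}+\frac{1}{\alpha T}\sum_{t=1}^T\zeta^t,$$ where $\|\cdot\|$ is the Euclidean norm and $S:=\max_{p\in\mathcal{P}}|I_p|$.
   Context: Setting. $\mathcal{X}$ is a set of feasible configurations, with feature map $\boldsymbol{\phi}:\mathcal{X}\to\mathbb{R}^m$ satisfying $\|\boldsymbol{\phi}(x)\|_\infty\le D$ for all $x\in\mathcal{X}$. The (unknown) true utility is $u^*(x)=\langle\mathbf{w}^*,\boldsymbol{\phi}(x)\rangle$ with $\mathbf{w}^*\in\mathbb{R}^m$. There is a finite set $\mathcal{P}$ of $n$ basic parts; for $p\in\mathcal{P}$, $x_p\in\mathcal{X}_p$ is the partial configuration of $x$ on $p$ and $x_{\overline{p}}$ the partial configuration on $\overline{p}=\mathcal{P}\setminus\{p\}$; the combination operator satisfies $x=x_p\circ x_{\overline p}$, and $y_p\circ x_{\overline p}$ (for $y_p\in\mathcal{X}_p$) is the configuration obtained from $x$ by replacing its $p$-portion by $y_p$. Each basic part $p$ has a feature subset $I_p\subseteq[m]$ consisting exactly of the features that depend on $x_p$ (for $i\notin I_p$, $\phi_i(x)$ does not change when $x_p$ changes with $x_{\overline p}$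 fixed); each $I_p$ contains at least one index not in any $I_q$, $q\ne p$, and $\bigcup_p I_p=[m]$. For a weight vector $\mathbf{w}$ and $Q\subseteq[m]$, write $u[Q](x)=\sum_{i\in Q}w_i\phi_i(x)$; $u^*[Q]$ uses $\mathbf{w}^*$ and $u^t[Q]$ uses $\mathbf{w}^t$. Conditional regret: $\mathrm{CREG}_p(x)=u^*(x^*_p\circ x_{\overline p})-u^*(x)$ where $x^*_p\in\arg\max_{y_p\in\mathcal{X}_p}u^*(y_p\circ x_{\overline p})$ (maxima assumed to exist). Algorithm PCL. Fix an ordering $p_1,\dots,p_n$ of $\mathcal{P}$ and let $J_k:=I_{p_k}\setminus\bigcup_{j=k+1}^n I_{p_j}$. Set $\mathbf{w}^1=0$ and an initial configuration $x^0\in\mathcal{X}$. For $t=1,\dots,T$: select a basic part $p^t=p_k$ and write $I^t=I_{p_k}$, $J^t=J_k$; define $x^t$ by $x^t_{\overline{p^t}}=x^{t-1}_{\overline{p^t}}$ and $x^t_{p^t}\in\arg\max_{y\in\mathcal{X}_{p^t}}u^t[J^t](y\circ x^{t-1}_{\overline{p^t}})$. The user returns an improvement $\hat x^t_{p^t}\in\mathcal{X}_{p^t}$ (returning $\hat x^t_{p^t}=x^t_{p^t}$ if it cannot be improved); write $\hat x^t=\hat x^t_{p^t}\circ x^t_{\overline{p^t}}$. If $u^t[I^t](\hat x^t)-u^t[I^t](x^t)\le0$ set $Q^t=I^t$, otherwise $Q^t=J^t$. Update $w^{t+1}_i=w^t_i$ for $i\notin Q^t$ and $w^{t+1}_i=w^t_i+\phi_i(\hat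 x^t)-\phi_i(x^t)$ for $i\in Q^t$. Conditional $\alpha$-informativeness: for all $t$, $u^*[I^t](\hat x^t)-u^*[I^t](x^t)\ge\alpha\big(u^*[I^t](x^*_{p^t}\circ x^t_{\overline{p^t}})-u^*[I^t](x^t)\big)$, where $x^*_{p^t}\in\arg\max_{y\in\mathcal{X}_{p^t}}u^*(y\circ x^t_{\overline{p^t}})$. Missing utility gain: $\zeta^t=0$ if $Q^t=I^t$, and $\zeta^t=u^*[I^t\setminus J^t](\hat x^t)-u^*[I^t\setminus J^t](x^t)$ if $Q^t=J^t$. *)

theory Defs
  imports Complex_Main
begin

text \<open>Configurations are modelled as functions from basic parts to partial
configurations: for a configuration x and a part p, x p is the partial
configuration x_p, and x(p := y) is the combination y_p \<circ> x_(P - p).\<close>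

definition upart :: "(nat \<Rightarrow> real) \<Rightarrow> ('x \<Rightarrow> nat \<Rightarrow> real) \<Rightarrow> nat set \<Rightarrow> 'x \<Rightarrow> real" where
  "upart w phi Q x = (\<Sum>i\<in>Q. w i * phi x i)"

text \<open>J_k = I_(p_k) minus the union of I_(p_j) for j > k (ordering given by list ps, 0-based).\<close>
definition Jset :: "('p \<Rightarrow> nat set) \<Rightarrow> 'p list \<Rightarrow> nat \<Rightarrow> nat set" where
  "Jset I ps k = I (ps ! k) - (\<Union>j\<in>{Suc k..<length ps}. I (ps ! j))"

definition CREG :: "(nat \<Rightarrow> real) \<Rightarrow> (('p \<Rightarrow> 'a) \<Rightarrow> nat \<Rightarrow> real) \<Rightarrow> nat \<Rightarrow> ('p \<Rightarrow> 'a set)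
    \<Rightarrow> 'p \<Rightarrow> ('p \<Rightarrow> 'a) \<Rightarrow> real" where
  "CREG ws phi m Xp p x =
     (SUP y\<in>Xp p. upart ws phi {..<m} (x(p := y))) - upart ws phi {..<m} x"

definition Qset :: "('p \<Rightarrow> nat set) \<Rightarrow> 'p list \<Rightarrow> (nat \<Rightarrow> real) \<Rightarrow> (('p \<Rightarrow> 'a) \<Rightarrow> nat \<Rightarrow> real)
    \<Rightarrow> nat \<Rightarrow> ('p \<Rightarrow> 'a) \<Rightarrow> ('p \<Rightarrow> 'a) \<Rightarrow> nat set" where
  "Qset I ps wt phi kt xt xht =
     (if upart wt phi (I (ps ! kt)) xht - upart wt phi (I (ps ! kt)) xt \<le> 0
      then I (ps ! kt) else Jset I ps kt)"

definition zeta :: "(nat \<Rightarrow> real) \<Rightarrow> ('p \<Rightarrow> nat set) \<Rightarrow> 'p list \<Rightarrow> (nat \<Rightarrow> real)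
    \<Rightarrow> (('p \<Rightarrow> 'a) \<Rightarrow> nat \<Rightarrow> real) \<Rightarrow> nat \<Rightarrow> ('p \<Rightarrow> 'a) \<Rightarrow> ('p \<Rightarrow> 'a) \<Rightarrow> real" where
  "zeta ws I ps wt phi kt xt xht =
     (if Qset I ps wt phi kt xt xht = I (ps ! kt) then 0
      else upart ws phi (I (ps ! kt) - Jset I ps kt) xht
         - upart ws phi (I (ps ! kt) - Jset I ps kt) xt)"

definition eucl_norm :: "(nat \<Rightarrow> real) \<Rightarrow> nat \<Rightarrow> real" where
  "eucl_norm w m = sqrt (\<Sum>i<m. (w i)\<^sup>2)"

end

theory Submission
  imports Defs "HOL-Analysis.Convex"
begin

theorem theorem2:
  fixes X :: "('p \<Rightarrow> 'a) set" and Xp :: "'p \<Rightarrow> 'a set" and P :: "'p set"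
    and ps :: "'p list" and phi :: "('p \<Rightarrow> 'a) \<Rightarrow> nat \<Rightarrow> real" and m :: nat
    and D :: real and ws :: "nat \<Rightarrow> real" and I :: "'p \<Rightarrow> nat set"
    and \<alpha> :: real and T :: nat
    and x :: "nat \<Rightarrow> 'p \<Rightarrow> 'a" and xh :: "nat \<Rightarrow> 'p \<Rightarrow> 'a"
    and k :: "nat \<Rightarrow> nat" and w :: "nat \<Rightarrow> nat \<Rightarrow> real"
  assumes finP: "finite P"
    and Xparts: "\<forall>z\<in>X. \<forall>p\<in>P. z p \<in> Xp p"
    and comb: "\<forall>z\<in>X. \<forall>p\<in>P. \<forall>y\<in>Xp p. z(p := y) \<in> X"
    and bound: "\<forall>z\<in>X. \<forall>i<m. \<bar>phi z i\<bar> \<le> D"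
    and Isub: "\<forall>p\<in>P. I p \<subseteq> {..<m}"
    and Idep: "\<forall>p\<in>P. \<forall>i<m. i \<in> I p \<longleftrightarrow> (\<exists>z\<in>X. \<exists>y\<in>Xp p. phi (z(p := y)) i \<noteq> phi z i)"
    and Iown: "\<forall>p\<in>P. \<exists>i\<in>I p. \<forall>q\<in>P. q \<noteq> p \<longrightarrow> i \<notin> I q"
    and Icover: "(\<Union>p\<in>P. I p) = {..<m}"
    and maxex: "\<forall>z\<in>X. \<forall>p\<in>P. \<exists>y\<in>Xp p. \<forall>y'\<in>Xp p.
                   upart ws phi {..<m} (z(p := y')) \<le> upart ws phi {..<m} (z(p := y))"
    and ps_dist: "distinct ps" and ps_set: "set ps = P"
    and alpha_pos: "0 < \<alpha>" and alpha_le: "\<alpha> \<le> 1"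
    and T_pos: "1 \<le> T"
    and x0: "x 0 \<in> X"
    and w1: "w 1 = (\<lambda>i. 0)"
    and sel: "\<forall>t\<in>{1..T}. k t < length ps"
    and step: "\<forall>t\<in>{1..T}. let p = ps ! k t in
                 x t = (x (t - 1))(p := x t p) \<and> x t p \<in> Xp p \<and>
                 (\<forall>y\<in>Xp p. upart (w t) phi (Jset I ps (k t)) ((x (t - 1))(p := y))
                              \<le> upart (w t) phi (Jset I ps (k t)) (x t))"
    and user: "\<forall>t\<in>{1..T}. let p = ps ! k t in
                 xh t = (x t)(p := xh t p) \<and> xh t p \<in> Xp p"
    and user_noimp: "\<forall>t\<in>{1..T}. let p = ps ! k t in
                 (\<forall>y\<in>Xp p. upart ws phi {..<m} ((x t)(p := y)) \<le> upart ws phi {..<m} (x t))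
                 \<longrightarrow> xh t = x t"
    and update: "\<forall>t\<in>{1..T}. \<forall>i. w (Suc t) i =
                 (if i \<in> Qset I ps (w t) phi (k t) (x t) (xh t)
                  then w t i + phi (xh t) i - phi (x t) i else w t i)"
    and informative: "\<forall>t\<in>{1..T}. let p = ps ! k t in
                 \<forall>ys\<in>Xp p. (\<forall>y\<in>Xp p. upart ws phi {..<m} ((x t)(p := y))
                                     \<le> upart ws phi {..<m} ((x t)(p := ys)))
                 \<longrightarrow> upart ws phi (I p) (xh t) - upart ws phi (I p) (x t)
                     \<ge> \<alpha> * (upart ws phi (I p) ((x t)(p := ys)) - upart ws phi (I p) (x t))"
  shows "(1 / real T) * (\<Sum>t=1..T. CREG ws phi m Xp (ps ! k t) (x t))
           \<le> 2 * D * real (Max ((\<lambda>p. card (I p)) ` P)) * eucl_norm ws m / (\<alpha> * sqrt (real T))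
             + (1 / (\<alpha> * real T)) * (\<Sum>t=1..T. zeta ws I ps (w t) phi (k t) (x t) (xh t))"
proof -
  define p where "p t = ps ! k t" for t
  define Q where "Q t = Qset I ps (w t) phi (k t) (x t) (xh t)" for t
  define S where "S = Max ((\<lambda>p. card (I p)) ` P)"
  define e where "e t i = (if i \<in> Q t then phi (xh t) i - phi (x t) i else 0)" for t i
  define Z where "Z = (\<Sum>t=1..T. zeta ws I ps (w t) phi (k t) (x t) (xh t))"
  define C where "C = (\<Sum>t=1..T. CREG ws phi m Xp (ps ! k t) (x t))"
  have pP: "p t \<in> P" if "t \<in> {1..T}" for t
    using sel that ps_set unfolding p_def by (metis nth_mem)
  have Ipm: "I (p t) \<subseteq> {..<m}" if "t \<in> {1..T}" for t
    using Isub pP[OF that] by blast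
  have finI: "finite (I (p t))" if "t \<in> {1..T}" for t
    using Ipm[OF that] finite_subset by blast
  have JI: "Jset I ps (k t) \<subseteq> I (p t)" for t by (auto simp: Jset_def p_def)
  have QI: "Q t \<subseteq> I (p t)" for t using JI[of t] by (auto simp: Q_def Qset_def p_def)
  have Qm: "Q t \<subseteq> {..<m}" if "t \<in> {1..T}" for t using QI[of t] Ipm[OF that] by blast
  have stp: "x t = (x (t - 1))(p t := x t (p t)) \<and> x t (p t) \<in> Xp (p t) \<and>
     (\<forall>y\<in>Xp (p t). upart (w t) phi (Jset I ps (k t)) ((x (t - 1))(p t := y))
                              \<le> upart (w t) phi (Jset I ps (k t)) (x t))" if "t \<in> {1..T}" for t
    using step that unfolding p_def Let_def by blast
  have usr: "xh t = (x t)(p t := xh t (p t)) \<and> xh t (p t) \<in> Xp (p t)" if "t \<in> {1..T}" for t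
    using user that unfolding p_def Let_def by blast
  have xX: "x t \<in> X" if "t \<le> T" for t
    using that
  proof (induction t)
    case 0 then show ?case using x0 by simp
  next
    case (Suc t)
    then have t1: "Suc t \<in> {1..T}" by simp
    have "x t \<in> X" using Suc by simp
    then show ?case using stp[OF t1] comb pP[OF t1] by (metis diff_Suc_1)
  qed
  have xhX: "xh t \<in> X" if "t \<in> {1..T}" for t
    using usr[OF that] xX[of t] that comb pP[OF that] by (metis atLeastAtMost_iff)
  have xh_eq: "xh t = (x (t - 1))(p t := xh t (p t))" if "t \<in> {1..T}" for t
    using usr[OF that] stp[OF that] by (metis fun_upd_upd)
  have wstep: "w (Suc t) i = w t i + e t i" if "t \<in> {1..T}" for t i
    using update that unfolding e_def Q_def by auto
  have wsum: "w (Suc n) i = (\<Sum>t=1..n. e t i)" if "n \<le> T" for n i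
    using that
  proof (induction n)
    case 0 then show ?case using w1 by simp
  next
    case (Suc n)
    then have "Suc n \<in> {1..T}" by simp
    then show ?case using wstep[of "Suc n" i] Suc by (simp add: sum.cl_ivl_Suc)
  qed
  have upd: "(\<Sum>i<m. v i * e t i) = upart v phi (Q t) (xh t) - upart v phi (Q t) (x t)"
    if "t \<in> {1..T}" for t and v :: "nat \<Rightarrow> real"
  proof -
    have "(\<Sum>i<m. v i * e t i) = (\<Sum>i<m. if i \<in> Q t then v i * (phi (xh t) i - phi (x t) i) else 0)"
      unfolding e_def by (rule sum.cong) auto
    also have "\<dots> = (\<Sum>i\<in>{..<m} \<inter> Q t. v i * (phi (xh t) i - phi (x t) i))"
      by (rule sum.inter_restrict[symmetric]) simp
    also have "{..<m} \<inter> Q t = Q t" using Qm[OF that] by blast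
    finally show ?thesis
      by (simp add: upart_def sum_subtractf right_diff_distrib)
  qed
  have cross: "(\<Sum>i<m. w t i * e t i) \<le> 0" if t: "t \<in> {1..T}" for t
  proof -
    have "upart (w t) phi (Q t) (xh t) - upart (w t) phi (Q t) (x t) \<le> 0"
    proof (cases "upart (w t) phi (I (ps ! k t)) (xh t) - upart (w t) phi (I (ps ! k t)) (x t) \<le> 0")
      case True
      then show ?thesis unfolding Q_def Qset_def by simp
    next
      case False
      then have "Q t = Jset I ps (k t)" unfolding Q_def Qset_def by simp
      moreover have "upart (w t) phi (Jset I ps (k t)) (xh t) \<le> upart (w t) phi (Jset I ps (k t)) (x t)"
        using stp[OF t] usr[OF t] xh_eq[OF t] by metis
      ultimately show ?thesis by simp
    qed
    then show ?thesis using upd[OF t] by simp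
  qed
  have Dnn: "0 \<le> D"
  proof -
    have "ps \<noteq> []" using sel T_pos by force
    then obtain p0 where p0: "p0 \<in> P" using ps_set by (metis list.set_sel(1))
    then obtain i where "i \<in> I p0" using Iown by blast
    then have "i < m" using Isub p0 by blast
    then show ?thesis using bound x0 by force
  qed
  have cardS: "card (I (p t)) \<le> S" if "t \<in> {1..T}" for t
    unfolding S_def using finP pP[OF that] by (intro Max_ge) auto
  have S1: "1 \<le> S"
  proof -
    have "1 \<in> {1..T}" using T_pos by simp
    moreover have "I (p 1) \<noteq> {}" using Iown pP[of 1] T_pos by fastforce
    ultimately show ?thesis using cardS[of 1] finI[of 1]
      by (metis card_0_eq le_trans less_one not_le)
  qed
  have esq: "(\<Sum>i<m. (e t i)^2) \<le> 4 * D^2 * S" if t: "t \<in> {1..T}" for t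
  proof -
    have "(\<Sum>i<m. (e t i)^2) = (\<Sum>i<m. if i \<in> Q t then (phi (xh t) i - phi (x t) i)^2 else 0)"
      unfolding e_def by (rule sum.cong) auto
    also have "\<dots> = (\<Sum>i\<in>{..<m} \<inter> Q t. (phi (xh t) i - phi (x t) i)^2)"
      by (rule sum.inter_restrict[symmetric]) simp
    also have "{..<m} \<inter> Q t = Q t" using Qm[OF t] by blast
    also have "(\<Sum>i\<in>Q t. (phi (xh t) i - phi (x t) i)^2) \<le> (\<Sum>i\<in>Q t. 4 * D^2)"
    proof (rule sum_mono)
      fix i assume "i \<in> Q t"
      then have im: "i < m" using Qm[OF t] by blast
      have "\<bar>phi (xh t) i - phi (x t) i\<bar> \<le> 2 * D"
      proof -
        have "x t \<in> X" using xX t by simp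
        then have "\<bar>phi (x t) i\<bar> \<le> D" "\<bar>phi (xh t) i\<bar> \<le> D" using bound xhX[OF t] im by auto
        then show ?thesis by linarith
      qed
      then have "\<bar>phi (xh t) i - phi (x t) i\<bar>^2 \<le> (2 * D)^2"
        by (intro power_mono) auto
      then show "(phi (xh t) i - phi (x t) i)^2 \<le> 4 * D^2" by (simp add: power_mult_distrib)
    qed
    also have "\<dots> = real (card (Q t)) * (4 * D^2)" by simp
    also have "\<dots> \<le> real S * (4 * D^2)"
    proof (rule mult_right_mono)
      have "card (Q t) \<le> card (I (p t))" using QI[of t] finI[OF t] by (rule card_mono[rotated])
      then show "real (card (Q t)) \<le> real S" using cardS[OF t] by simp
    qed simp
    finally show ?thesis by (simp add: mult.commute)
  qed
  have normb: "(\<Sum>i<m. (w (Suc n) i)^2) \<le> 4 * D^2 * S * n" if "n \<le> T" for n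
    using that
  proof (induction n)
    case 0 then show ?case using w1 by simp
  next
    case (Suc n)
    then have t: "Suc n \<in> {1..T}" by simp
    have "(\<Sum>i<m. (w (Suc (Suc n)) i)^2) = (\<Sum>i<m. (w (Suc n) i + e (Suc n) i)^2)"
      using wstep[OF t] by simp
    also have "\<dots> = (\<Sum>i<m. (w (Suc n) i)^2) + 2 * (\<Sum>i<m. w (Suc n) i * e (Suc n) i) + (\<Sum>i<m. (e (Suc n) i)^2)"
      by (simp add: power2_sum sum.distrib sum_distrib_left mult.assoc)
    also have "\<dots> \<le> 4 * D^2 * S * n + 0 + 4 * D^2 * S"
      using Suc cross[OF t] esq[OF t] by simp
    finally show ?case by (simp add: algebra_simps)
  qed
  have lin_t: "(\<Sum>i<m. ws i * e t i) = upart ws phi (I (p t)) (xh t) - upart ws phi (I (p t)) (x t)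
      - zeta ws I ps (w t) phi (k t) (x t) (xh t)" if t: "t \<in> {1..T}" for t
  proof (cases "Q t = I (p t)")
    case True
    then show ?thesis using upd[OF t, of ws] unfolding zeta_def Q_def p_def by simp
  next
    case False
    then have QJ: "Q t = Jset I ps (k t)" unfolding Q_def Qset_def p_def by (auto split: if_splits)
    have z: "zeta ws I ps (w t) phi (k t) (x t) (xh t) = upart ws phi (I (p t) - Jset I ps (k t)) (xh t)
         - upart ws phi (I (p t) - Jset I ps (k t)) (x t)"
      using False unfolding zeta_def Q_def p_def by simp
    have split: "upart ws phi (I (p t)) z = upart ws phi (I (p t) - Jset I ps (k t)) z + upart ws phi (Jset I ps (k t)) z" for z
      unfolding upart_def using sum.subset_diff[OF JI finI[OF t]] by simp
    show ?thesis using upd[OF t, of ws] QJ z split[of "xh t"] split[of "x t"] by simp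
  qed
  have splitm: "upart ws phi {..<m} z = upart ws phi (I (p t)) z + upart ws phi ({..<m} - I (p t)) z"
    if t: "t \<in> {1..T}" for t z
    unfolding upart_def using sum.subset_diff[OF Ipm[OF t]] by (simp add: add.commute)
  have creg: "\<alpha> * CREG ws phi m Xp (p t) (x t) \<le> upart ws phi (I (p t)) (xh t) - upart ws phi (I (p t)) (x t)"
    if t: "t \<in> {1..T}" for t
  proof -
    have xt: "x t \<in> X" using xX t by simp
    obtain ys where ys: "ys \<in> Xp (p t)" and ysm: "\<forall>y'\<in>Xp (p t).
        upart ws phi {..<m} ((x t)(p t := y')) \<le> upart ws phi {..<m} ((x t)(p t := ys))"
      using maxex xt pP[OF t] by blast
    have sup: "(SUP y\<in>Xp (p t). upart ws phi {..<m} ((x t)(p t := y))) = upart ws phi {..<m} ((x t)(p t := ys))"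
      using ys ysm by (intro cSup_eq_maximum) auto
    have same: "upart ws phi ({..<m} - I (p t)) ((x t)(p t := ys)) = upart ws phi ({..<m} - I (p t)) (x t)"
      unfolding upart_def
    proof (rule sum.cong)
      fix i assume "i \<in> {..<m} - I (p t)"
      then have "phi ((x t)(p t := ys)) i = phi (x t) i"
        using Idep pP[OF t] xt ys by blast
      then show "ws i * phi ((x t)(p t := ys)) i = ws i * phi (x t) i" by simp
    qed simp
    have cr: "CREG ws phi m Xp (p t) (x t) = upart ws phi (I (p t)) ((x t)(p t := ys)) - upart ws phi (I (p t)) (x t)"
      unfolding CREG_def sup using splitm[OF t, of "(x t)(p t := ys)"] splitm[OF t, of "x t"] same by simp
    have "\<forall>y\<in>Xp (p t). upart ws phi {..<m} ((x t)(p t := y)) \<le> upart ws phi {..<m} ((x t)(p t := ys))"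
      using ysm by blast
    then have "upart ws phi (I (p t)) (xh t) - upart ws phi (I (p t)) (x t)
                     \<ge> \<alpha> * (upart ws phi (I (p t)) ((x t)(p t := ys)) - upart ws phi (I (p t)) (x t))"
      using informative t ys unfolding p_def Let_def by blast
    then show ?thesis using cr by simp
  qed
  define W where "W = w (Suc T)"
  have lin: "(\<Sum>i<m. ws i * W i) = (\<Sum>t=1..T. \<Sum>i<m. ws i * e t i)"
    unfolding W_def using wsum[of T] by (simp add: sum_distrib_left) (rule sum.swap)
  have aC: "\<alpha> * C \<le> (\<Sum>i<m. ws i * W i) + Z"
  proof -
    have "\<alpha> * C = (\<Sum>t=1..T. \<alpha> * CREG ws phi m Xp (p t) (x t))"
      unfolding C_def p_def by (simp add: sum_distrib_left)
    also have "\<dots> \<le> (\<Sum>t=1..T. upart ws phi (I (p t)) (xh t) - upart ws phi (I (p t)) (x t))"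
      by (rule sum_mono) (use creg in auto)
    also have "\<dots> = (\<Sum>t=1..T. (\<Sum>i<m. ws i * e t i) + zeta ws I ps (w t) phi (k t) (x t) (xh t))"
      by (rule sum.cong) (use lin_t in auto)
    also have "\<dots> = (\<Sum>i<m. ws i * W i) + Z" unfolding Z_def lin by (simp add: sum.distrib)
    finally show ?thesis .
  qed
  have CS: "(\<Sum>i<m. ws i * W i) \<le> eucl_norm ws m * sqrt (\<Sum>i<m. (W i)^2)"
  proof -
    have "(\<Sum>i<m. ws i * W i) \<le> \<bar>\<Sum>i<m. ws i * W i\<bar>" by simp
    also have "\<dots> = sqrt ((\<Sum>i<m. ws i * W i)^2)" by simp
    also have "\<dots> \<le> sqrt ((\<Sum>i<m. (ws i)^2) * (\<Sum>i<m. (W i)^2))"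
      by (rule real_sqrt_le_mono) (rule Cauchy_Schwarz_ineq_sum)
    finally show ?thesis unfolding eucl_norm_def by (simp add: real_sqrt_mult)
  qed
  have Tp: "0 < real T" using T_pos by simp
  have sT: "0 < sqrt (real T)" using Tp by simp
  have en: "0 \<le> eucl_norm ws m" unfolding eucl_norm_def by (simp add: sum_nonneg)
  have Wb: "sqrt (\<Sum>i<m. (W i)^2) \<le> 2 * D * S * sqrt (real T)"
  proof -
    have "sqrt (\<Sum>i<m. (W i)^2) \<le> sqrt ((2 * D)^2 * S * T)"
      using normb[of T] unfolding W_def by (intro real_sqrt_le_mono) (simp add: power_mult_distrib)
    also have "\<dots> = 2 * D * sqrt S * sqrt T" using Dnn by (simp add: real_sqrt_mult)
    also have "\<dots> \<le> 2 * D * S * sqrt T"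
    proof -
      have s1: "1 \<le> real S" using S1 by simp
      then have "real S \<le> real S * real S" by (simp add: mult_le_cancel_left1)
      then have "sqrt (real S) \<le> sqrt (real S * real S)" by (rule real_sqrt_le_mono)
      then have "sqrt (real S) \<le> real S" using s1 by simp
      then show ?thesis using Dnn sT by (intro mult_right_mono mult_left_mono) auto
    qed
    finally show ?thesis .
  qed
  have main: "\<alpha> * C \<le> 2 * D * S * eucl_norm ws m * sqrt (real T) + Z"
  proof -
    have "eucl_norm ws m * sqrt (\<Sum>i<m. (W i)^2) \<le> eucl_norm ws m * (2 * D * S * sqrt (real T))"
      using Wb en by (rule mult_left_mono)
    moreover have "eucl_norm ws m * (2 * D * S * sqrt (real T)) = 2 * D * S * eucl_norm ws m * sqrt (real T)"
      by (simp only: mult_ac)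
    ultimately show ?thesis using aC CS by linarith
  qed
  have eqT: "sqrt (real T) * sqrt (real T) = real T" using Tp by simp
  have eq1: "2 * D * S * eucl_norm ws m * sqrt (real T) / (\<alpha> * real T)
      = 2 * D * S * eucl_norm ws m / (\<alpha> * sqrt (real T))"
  proof -
    have "2 * D * S * eucl_norm ws m * sqrt (real T) / (\<alpha> * real T)
      = (2 * D * S * eucl_norm ws m * sqrt (real T)) / ((\<alpha> * sqrt (real T)) * sqrt (real T))"
    proof -
      have "\<alpha> * real T = (\<alpha> * sqrt (real T)) * sqrt (real T)" using eqT by (simp add: mult.assoc)
      then show ?thesis by (simp only:)
    qed
    also have "\<dots> = 2 * D * S * eucl_norm ws m / (\<alpha> * sqrt (real T))"
      using sT by (intro nonzero_mult_divide_mult_cancel_right) simp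
    finally show ?thesis .
  qed
  have "(1 / real T) * C = (\<alpha> * C) / (\<alpha> * real T)" using alpha_pos by simp
  also have "\<dots> \<le> (2 * D * S * eucl_norm ws m * sqrt (real T) + Z) / (\<alpha> * real T)"
    using main alpha_pos Tp by (intro divide_right_mono) auto
  also have "\<dots> = 2 * D * S * eucl_norm ws m * sqrt (real T) / (\<alpha> * real T) + (1 / (\<alpha> * real T)) * Z"
    by (simp only: add_divide_distrib) simp
  also have "\<dots> = 2 * D * S * eucl_norm ws m / (\<alpha> * sqrt (real T)) + (1 / (\<alpha> * real T)) * Z"
    by (simp only: eq1)
  finally show ?thesis unfolding C_def Z_def S_def .
qed

end
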